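(* Assume the standing assumptions below. There exist a constant $\epsilon_b>0$ and a conditional distribution $\bar\pi_{o,b}(o_t,b_t\mid s_t;\theta)$ (for each $s_t\in\mathcal S$ and $\theta\in\Theta$ a probability mass function on $\mathcal O\times\{0,1\}$) such that for all $\theta\in\Theta$ and all $b_t\in\{0,1\}$, $s_t\in\mathcal S$, $o_{t-1},o_t\in\mathcal O$, $$0<\epsilon_b\zeta\,\bar\pi_{o,b}(o_t,b_t\mid s_t;\theta)\le\pi_b(b_t\mid s_t,o_{t-1};\theta_b)\,\bar\pi_{hi}(o_t\mid s_t,o_{t-1},b_t;\theta_{hi})\le\epsilon_b^{-1}|\mathcal O|\,\bar\pi_{o,b}(o_t,b_t\mid s_t;\theta).$$
   Context: $\mathcal S,\mathcal O$ are finite sets; $\Theta=\Theta_{hi}\times\Theta_{lo}\times\Theta_b$ is a convex compact subset of a Euclidean space, $\theta=(\theta_{hi},\theta_{lo},\theta_b)$. $\pi_{hi}(o\mid s;\theta_{hi})$ is a distribution on $\mathcal O$ and $\pi_b(b\mid s,o';\theta_b)$ a distribution on $\{0,1\}$. For a fixed $\zeta\in(0,1)$, $\bar\pi_{hi}(o_t\mid s_t,o_{t-1},b_t;\theta_{hi})$ equals $\pi_{hi}(o_t\mid s_t;\theta_{hi})$ if $b_t=1$, $1-\zeta+\zeta/|\mathcal O|$ if $b_t=0,o_t=o_{t-1}$, and $\zeta/|\mathcal O|$ if $b_t=0,o_t\ne o_{t-1}$. Standing assumptions: there is an open $\tilde\Theta\supseteq\Theta$ on which $\pi_{hi}$ and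 $\pi_b$ (and the low-level policy) are defined, strictly positive, and continuously differentiable in $\theta$ for all other arguments. *)

theory Defs
  imports "HOL-Analysis.Analysis"
begin

definition C1_on :: "'a::euclidean_space set \<Rightarrow> ('a \<Rightarrow> real) \<Rightarrow> bool" where
  "C1_on U f \<longleftrightarrow> (\<exists>f' :: 'a \<Rightarrow> 'a \<Rightarrow>\<^sub>L real.
      (\<forall>x\<in>U. (f has_derivative blinfun_apply (f' x)) (at x)) \<and> continuous_on U f')"

text \<open>The option-transition policy pi_hi_bar(o_t | s_t, o_{t-1}, b_t; theta_hi);
  b_t = 1 is rendered as True.\<close>
definition pi_hi_bar ::
  "real \<Rightarrow> ('h \<Rightarrow> 's \<Rightarrow> 'oc::finite \<Rightarrow> real) \<Rightarrow> 'h \<Rightarrow> 's \<Rightarrow> 'oc \<Rightarrow> bool \<Rightarrow> 'oc \<Rightarrow> real" where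
  "pi_hi_bar \<zeta> pi_hi th s op b oc =
     (if b then pi_hi th s oc
      else if oc = op then 1 - \<zeta> + \<zeta> / real CARD('oc)
      else \<zeta> / real CARD('oc))"

end

theory Submission
  imports Defs
begin

lemma C1_cont: "C1_on U f \<Longrightarrow> open U \<Longrightarrow> continuous_on U f"
  unfolding C1_on_def
  by (metis continuous_at_imp_continuous_on has_derivative_continuous)

lemma pos_lower:
  fixes f :: "'a::topological_space \<Rightarrow> real"
  assumes "compact P" "continuous_on P f" "\<And>x. x \<in> P \<Longrightarrow> 0 < f x"
  shows "\<exists>c>0. \<forall>x\<in>P. c \<le> f x"
proof (cases "P = {}")
  case True then show ?thesis by (intro exI[of _ 1]) auto
next
  case False
  then obtain x0 where "x0 \<in> P" "\<forall>y\<in>P. f x0 \<le> f y"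
    using continuous_attains_inf[OF assms(1) False assms(2)] by blast
  then show ?thesis using assms(3) by blast
qed

theorem lemma7:
  fixes \<zeta> :: real
    and Theta_hi :: "'h::euclidean_space set"
    and Theta_lo :: "'l::euclidean_space set"
    and Theta_b :: "'c::euclidean_space set"
    and U_hi :: "'h set" and U_lo :: "'l set" and U_b :: "'c set"
    and pi_hi :: "'h \<Rightarrow> 's::finite \<Rightarrow> 'oc::finite \<Rightarrow> real"
    and pi_b :: "'c \<Rightarrow> 's \<Rightarrow> 'oc \<Rightarrow> bool \<Rightarrow> real"
    and pi_lo :: "'l \<Rightarrow> 's \<Rightarrow> 'oc \<Rightarrow> 'act \<Rightarrow> real"
  assumes zeta: "0 < \<zeta>" "\<zeta> < 1"
    and Theta_convex: "convex (Theta_hi \<times> Theta_lo \<times> Theta_b)"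
    and Theta_compact: "compact (Theta_hi \<times> Theta_lo \<times> Theta_b)"
    and U_open: "open U_hi" "open U_lo" "open U_b"
    and U_sup: "Theta_hi \<subseteq> U_hi" "Theta_lo \<subseteq> U_lo" "Theta_b \<subseteq> U_b"
    and pi_hi_pos: "\<And>th s oc. th \<in> U_hi \<Longrightarrow> 0 < pi_hi th s oc"
    and pi_hi_sum: "\<And>th s. th \<in> U_hi \<Longrightarrow> (\<Sum>oc\<in>UNIV. pi_hi th s oc) = 1"
    and pi_hi_C1: "\<And>s oc. C1_on U_hi (\<lambda>th. pi_hi th s oc)"
    and pi_b_pos: "\<And>th s op b. th \<in> U_b \<Longrightarrow> 0 < pi_b th s op b"
    and pi_b_sum: "\<And>th s op. th \<in> U_b \<Longrightarrow> pi_b th s op True + pi_b th s op False = 1"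
    and pi_b_C1: "\<And>s op b. C1_on U_b (\<lambda>th. pi_b th s op b)"
    and pi_lo_pos: "\<And>th s oc a. th \<in> U_lo \<Longrightarrow> 0 < pi_lo th s oc a"
    and pi_lo_C1: "\<And>s oc a. C1_on U_lo (\<lambda>th. pi_lo th s oc a)"
  shows "\<exists>eps_b > 0. \<exists>pi_ob :: 'h \<times> 'l \<times> 'c \<Rightarrow> 's \<Rightarrow> 'oc \<Rightarrow> bool \<Rightarrow> real.
    (\<forall>\<theta> \<in> Theta_hi \<times> Theta_lo \<times> Theta_b. \<forall>s.
        (\<forall>oc b. 0 \<le> pi_ob \<theta> s oc b) \<and> (\<Sum>oc\<in>UNIV. \<Sum>b\<in>UNIV. pi_ob \<theta> s oc b) = 1) \<and>
    (\<forall>th_hi th_lo th_b. (th_hi, th_lo, th_b) \<in> Theta_hi \<times> Theta_lo \<times> Theta_b \<longrightarrow>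
      (\<forall>b s op oc.
        0 < eps_b * \<zeta> * pi_ob (th_hi, th_lo, th_b) s oc b \<and>
        eps_b * \<zeta> * pi_ob (th_hi, th_lo, th_b) s oc b
          \<le> pi_b th_b s op b * pi_hi_bar \<zeta> pi_hi th_hi s op b oc \<and>
        pi_b th_b s op b * pi_hi_bar \<zeta> pi_hi th_hi s op b oc
          \<le> real CARD('oc) / eps_b * pi_ob (th_hi, th_lo, th_b) s oc b))"
proof -
  define P where "P = Theta_hi \<times> Theta_lo \<times> Theta_b"
  have "\<forall>k::'s \<times> 'oc \<times> bool. \<exists>c>0. \<forall>x\<in>P. c \<le> pi_b (snd (snd x)) (fst k) (fst (snd k)) (snd (snd k))"
  proof
    fix k :: "'s \<times> 'oc \<times> bool"
    have sub: "(snd \<circ> snd) ` P \<subseteq> U_b" using U_sup unfolding P_def by auto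
    have c1: "continuous_on U_b (\<lambda>th. pi_b th (fst k) (fst (snd k)) (snd (snd k)))"
      by (rule C1_cont[OF pi_b_C1 U_open(3)])
    have "continuous_on P ((\<lambda>th. pi_b th (fst k) (fst (snd k)) (snd (snd k))) \<circ> (snd \<circ> snd))"
      by (rule continuous_on_compose) (auto intro!: continuous_intros continuous_on_subset[OF c1] simp: sub[unfolded o_def] P_def U_sup(3)[THEN subsetD])
    hence "continuous_on P (\<lambda>x. pi_b (snd (snd x)) (fst k) (fst (snd k)) (snd (snd k)))"
      by (simp add: o_def)
    moreover have "\<And>x. x \<in> P \<Longrightarrow> 0 < pi_b (snd (snd x)) (fst k) (fst (snd k)) (snd (snd k))"
      using sub pi_b_pos by auto
    ultimately show "\<exists>c>0. \<forall>x\<in>P. c \<le> pi_b (snd (snd x)) (fst k) (fst (snd k)) (snd (snd k))"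
      using pos_lower Theta_compact unfolding P_def by blast
  qed
  then obtain C where C: "\<And>k. C k > 0" "\<And>k x. x \<in> P \<Longrightarrow> C k \<le> pi_b (snd (snd x)) (fst k) (fst (snd k)) (snd (snd k))"
    by metis
  define c where "c = Min (range C)"
  have cpos: "c > 0" unfolding c_def using C(1) by (subst Min_gr_iff) auto
  have cle: "c \<le> pi_b th_b s op b" if "(th_hi, th_lo, th_b) \<in> P" for th_hi th_lo th_b s op b
  proof -
    have "c \<le> C (s, op, b)" unfolding c_def by (rule Min_le) auto
    also have "\<dots> \<le> pi_b th_b s op b" using C(2)[OF that, of "(s, op, b)"] by simp
    finally show ?thesis .
  qed
  define eps where "eps = min c (1/2)"
  define n where "n = real CARD('oc)"
  have n1: "n \<ge> 1" unfolding n_def by (simp add: Suc_leI)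
  define pob :: "'h \<times> 'l \<times> 'c \<Rightarrow> 's \<Rightarrow> 'oc \<Rightarrow> bool \<Rightarrow> real" where
    "pob = (\<lambda>\<theta> s oc b. if b then pi_hi (fst \<theta>) s oc / 2 else 1 / (2 * n))"
  have epos: "eps > 0" using cpos unfolding eps_def by simp
  show ?thesis
  proof (intro exI[of _ eps] conjI epos exI[of _ pob] ballI allI impI)
    fix \<theta> s oc b assume th: "\<theta> \<in> Theta_hi \<times> Theta_lo \<times> Theta_b"
    then have "fst \<theta> \<in> U_hi" using U_sup by auto
    then show "0 \<le> pob \<theta> s oc b" unfolding pob_def using pi_hi_pos[of "fst \<theta>"] n1
      by (auto simp: less_imp_le)
  next
    fix \<theta> s assume th: "\<theta> \<in> Theta_hi \<times> Theta_lo \<times> Theta_b"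
    then have u: "fst \<theta> \<in> U_hi" using U_sup by auto
    have "(\<Sum>oc\<in>UNIV. \<Sum>b\<in>UNIV. pob \<theta> s oc b) = (\<Sum>oc\<in>UNIV. pi_hi (fst \<theta>) s oc / 2 + 1 / (2 * n))"
      unfolding pob_def by (simp add: UNIV_bool add.commute)
    also have "\<dots> = (\<Sum>oc\<in>UNIV. pi_hi (fst \<theta>) s oc) / 2 + n * (1 / (2 * n))"
      by (simp add: sum.distrib sum_divide_distrib n_def)
    also have "\<dots> = 1" using pi_hi_sum[OF u] n1 by simp
    finally show "(\<Sum>oc\<in>UNIV. \<Sum>b\<in>UNIV. pob \<theta> s oc b) = 1" .
  next
    fix th_hi th_lo th_b b s op oc
    assume th: "(th_hi, th_lo, th_b) \<in> Theta_hi \<times> Theta_lo \<times> Theta_b"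
    have uh: "th_hi \<in> U_hi" and ub: "th_b \<in> U_b" using th U_sup by auto
    have cl: "c \<le> pi_b th_b s op b" using cle th unfolding P_def by blast
    have pbpos: "0 < pi_b th_b s op b" using pi_b_pos[OF ub] .
    have pble: "pi_b th_b s op b \<le> 1" using pi_b_sum[OF ub, of s op] pi_b_pos[OF ub, of s op True] pi_b_pos[OF ub, of s op False]
      by (cases b) auto
    have hpos: "0 < pi_hi th_hi s oc" using pi_hi_pos[OF uh] .
    have e1: "eps \<le> c" "eps \<le> 1/2" unfolding eps_def by auto
    show "0 < eps * \<zeta> * pob (th_hi, th_lo, th_b) s oc b"
      unfolding pob_def using epos zeta hpos n1 by auto
    show "eps * \<zeta> * pob (th_hi, th_lo, th_b) s oc b
          \<le> pi_b th_b s op b * pi_hi_bar \<zeta> pi_hi th_hi s op b oc"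
    proof (cases b)
      case True
      have "eps * \<zeta> * (pi_hi th_hi s oc / 2) \<le> c * 1 * pi_hi th_hi s oc"
        using e1 zeta hpos epos by (intro mult_mono) auto
      also have "\<dots> \<le> pi_b th_b s op b * pi_hi th_hi s oc"
        using cl hpos by simp
      finally show ?thesis using True unfolding pob_def pi_hi_bar_def by simp
    next
      case False
      have z: "\<zeta> / n \<le> pi_hi_bar \<zeta> pi_hi th_hi s op b oc"
        using False zeta unfolding pi_hi_bar_def n_def by auto
      have "eps * \<zeta> * (1 / (2 * n)) \<le> c * (\<zeta> / n)"
        using e1 zeta n1 epos by (simp add: field_simps)
      also have "\<dots> \<le> pi_b th_b s op b * pi_hi_bar \<zeta> pi_hi th_hi s op b oc"
        using cl z cpos zeta n1 by (intro mult_mono) auto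
      finally show ?thesis using False unfolding pob_def by simp
    qed
    show "pi_b th_b s op b * pi_hi_bar \<zeta> pi_hi th_hi s op b oc
          \<le> real CARD('oc) / eps * pob (th_hi, th_lo, th_b) s oc b"
    proof (cases b)
      case True
      have "pi_b th_b s op b * pi_hi th_hi s oc \<le> 1 * pi_hi th_hi s oc"
        using pble hpos by (intro mult_right_mono) auto
      also have "\<dots> \<le> (n / eps) * (pi_hi th_hi s oc / 2)"
      proof -
        have "1 \<le> n / (2 * eps)" using e1 n1 epos by (simp add: field_simps)
        then have "1 * pi_hi th_hi s oc \<le> n / (2 * eps) * pi_hi th_hi s oc"
          using hpos by (intro mult_right_mono) auto
        then show ?thesis by simp
      qed
      finally show ?thesis using True unfolding pob_def pi_hi_bar_def n_def by simp
    next
      case False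
      have zc: "\<zeta> \<le> real CARD('oc)" using zeta n1 unfolding n_def by linarith
      have z: "pi_hi_bar \<zeta> pi_hi th_hi s op b oc \<le> 1"
      proof (cases "oc = op")
        case True
        have "\<zeta> / real CARD('oc) \<le> \<zeta>" using zeta n1 unfolding n_def
          by (simp add: divide_le_eq)
        then show ?thesis using True False unfolding pi_hi_bar_def by simp
      next
        case F2: False
        have "\<zeta> / real CARD('oc) \<le> 1" using zc n1 unfolding n_def
          by (simp add: divide_le_eq)
        then show ?thesis using F2 False unfolding pi_hi_bar_def by simp
      qed
      have zz: "0 \<le> \<zeta> / real CARD('oc)" using zeta by simp
      have z0: "0 \<le> pi_hi_bar \<zeta> pi_hi th_hi s op b oc"
        using False zeta zz unfolding pi_hi_bar_def by auto
      have "pi_b th_b s op b * pi_hi_bar \<zeta> pi_hi th_hi s op b oc \<le> 1 * 1"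
        using pble z pbpos z0 by (intro mult_mono) auto
      also have "\<dots> \<le> n / eps * (1 / (2 * n))"
        using e1 n1 epos by (simp add: field_simps)
      finally show ?thesis using False unfolding pob_def n_def by simp
    qed
  qed
qed

end
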